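(* Let $A=(a_{ij}), B=(b_{ij})\in\mathbb{R}^{n\times n}_+$ be extended Leslie matrices, i.e. entrywise nonnegative matrices whose only possibly nonzero entries are those in the first row, the subdiagonal entries $(i,i-1)$ for $2\le i\le n$, and the $(n,n)$ entry. Define $m_{i,i-1}=\max\{a_{i,i-1},b_{i,i-1}\}$ for $2\le i\le n$ and $m_{nn}=\max\{a_{nn},b_{nn}\}$. Let $S_1$ be the matrix whose first row equals the first row of $A$, whose $(i,i-1)$ entries are $m_{i,i-1}$ for $2\le i\le n$, whose $(n,n)$ entry is $m_{nn}$, and all other entries zero; let $S_2$ be defined identically but with first row equal to the first row of $B$. Assume $S_1$ and $S_2$ are both Schur-stable. Let $\mathcal{L}_{A,B}$ be the set of entrywise nonnegative matrices $D\in\mathbb{R}^{n\times n}$ whose only possibly nonzero entries are the subdiagonal entries $d_{i,i-1}$ ($2\le i\le n$) and the entry $d_{nn}$, and such that $A-D\ge 0$ and $B-D\ge 0$ entrywise. Then for every $D\in\mathcal{L}_{A,B}$ the matrix $$M=\begin{pmatrix} A-D & D\\ D & B-D\end{pmatrix}$$ is Schur-stable.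
   Context: A real square matrix is Schur-stable if its spectral radius is strictly less than $1$. $\mathbb{R}^{n\times n}_+$ denotes the set of entrywise nonnegative $n\times n$ real matrices; inequalities between matrices are entrywise. *)

theory Defs
  imports "Jordan_Normal_Form.Spectral_Radius"
begin

text \<open>Matrices are Jordan_Normal_Form matrices with 0-based indices:
  paper entry (i,j) corresponds to index (i-1,j-1).\<close>

definition schur_stable :: "real mat \<Rightarrow> bool" where
  "schur_stable A \<longleftrightarrow> spectral_radius (map_mat complex_of_real A) < 1"

definition nonneg_mat :: "real mat \<Rightarrow> bool" where
  "nonneg_mat A \<longleftrightarrow> (\<forall>i < dim_row A. \<forall>j < dim_col A. A $$ (i,j) \<ge> 0)"

definition ext_leslie :: "nat \<Rightarrow> real mat \<Rightarrow> bool" where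
  "ext_leslie n A \<longleftrightarrow> A \<in> carrier_mat n n \<and> nonneg_mat A \<and>
     (\<forall>i < n. \<forall>j < n. A $$ (i,j) \<noteq> 0 \<longrightarrow> i = 0 \<or> i = j + 1 \<or> (i = n - 1 \<and> j = n - 1))"

definition leslie_max :: "nat \<Rightarrow> real mat \<Rightarrow> real mat \<Rightarrow> real mat \<Rightarrow> real mat" where
  "leslie_max n F A B = mat n n (\<lambda>(i,j).
     if i = 0 then F $$ (0,j)
     else if i = j + 1 \<or> (i = n - 1 \<and> j = n - 1) then max (A $$ (i,j)) (B $$ (i,j))
     else 0)"

definition L_set :: "nat \<Rightarrow> real mat \<Rightarrow> real mat \<Rightarrow> real mat set" where
  "L_set n A B = {D. D \<in> carrier_mat n n \<and> nonneg_mat D \<and>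
     (\<forall>i < n. \<forall>j < n. D $$ (i,j) \<noteq> 0 \<longrightarrow> i = j + 1 \<or> (i = n - 1 \<and> j = n - 1)) \<and>
     nonneg_mat (A - D) \<and> nonneg_mat (B - D)}"

end

theory Submission imports Defs begin

lemma pow_entry_Suc:
  assumes P: "P \<in> carrier_mat n n" and i: "i < n" and j: "j < n"
  shows "(P ^\<^sub>m Suc k) $$ (i,j) = (\<Sum>l<n. (P ^\<^sub>m k) $$ (i,l) * P $$ (l,j))"
proof -
  have Pk: "P ^\<^sub>m k \<in> carrier_mat n n" using P by simp
  show ?thesis using Pk P i j
    by (simp add: scalar_prod_def atLeast0LessThan)
qed

lemma pow_growth:
  fixes P :: "real mat"
  assumes P: "P \<in> carrier_mat n n"
    and Pnn: "\<And>i j. i < n \<Longrightarrow> j < n \<Longrightarrow> P $$ (i,j) \<ge> 0"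
    and a: "\<alpha> \<ge> 0"
    and pnn: "\<And>j. j < n \<Longrightarrow> p j \<ge> 0"
    and grow: "\<And>i. i < n \<Longrightarrow> \<alpha> * p i \<le> (\<Sum>j<n. P $$ (i,j) * p j)"
  shows "(\<forall>i<n. \<forall>j<n. (P ^\<^sub>m k) $$ (i,j) \<ge> 0) \<and> (\<forall>i<n. \<alpha>^k * p i \<le> (\<Sum>j<n. (P ^\<^sub>m k) $$ (i,j) * p j))"
proof (induction k)
  case 0
  have "(\<Sum>j<n. (1\<^sub>m n :: real mat) $$ (i,j) * p j) = p i" if "i < n" for i
  proof -
    have "(\<Sum>j<n. (1\<^sub>m n :: real mat) $$ (i,j) * p j) = (\<Sum>j<n. (if j = i then p j else 0))"
      by (rule sum.cong, auto simp: that)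
    also have "\<dots> = p i" using that by simp
    finally show ?thesis .
  qed
  then show ?case using P by auto
next
  case (Suc k)
  let ?X = "P ^\<^sub>m k"
  from Suc have Xnn: "\<And>i j. i<n \<Longrightarrow> j<n \<Longrightarrow> ?X $$ (i,j) \<ge> 0"
    and IH: "\<And>i. i<n \<Longrightarrow> \<alpha>^k * p i \<le> (\<Sum>j<n. ?X $$ (i,j) * p j)" by auto
  have nn: "\<forall>i<n. \<forall>j<n. (P ^\<^sub>m Suc k) $$ (i,j) \<ge> 0"
  proof (intro allI impI)
    fix i j assume "i < n" "j < n"
    then show "(P ^\<^sub>m Suc k) $$ (i,j) \<ge> 0"
      unfolding pow_entry_Suc[OF P \<open>i < n\<close> \<open>j < n\<close>]
      using Xnn Pnn by (auto intro!: sum_nonneg)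
  qed
  have gr: "\<alpha>^Suc k * p i \<le> (\<Sum>j<n. (P ^\<^sub>m Suc k) $$ (i,j) * p j)" if i: "i < n" for i
  proof -
    have e1: "(\<Sum>j<n. (P ^\<^sub>m Suc k) $$ (i,j) * p j) = (\<Sum>j<n. (\<Sum>l<n. ?X $$ (i,l) * P $$ (l,j)) * p j)"
      using i pow_entry_Suc[OF P i] by (intro sum.cong refl) simp
    have e2: "(\<Sum>j<n. (\<Sum>l<n. ?X $$ (i,l) * P $$ (l,j)) * p j) = (\<Sum>l<n. ?X $$ (i,l) * (\<Sum>j<n. P $$ (l,j) * p j))"
      unfolding sum_distrib_left sum_distrib_right
      by (subst sum.swap, rule sum.cong, simp, rule sum.cong, simp, simp add: mult.assoc)
    have e3: "(\<Sum>l<n. ?X $$ (i,l) * (\<alpha> * p l)) \<le> (\<Sum>l<n. ?X $$ (i,l) * (\<Sum>j<n. P $$ (l,j) * p j))"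
      using Xnn i grow by (auto intro!: sum_mono mult_left_mono)
    have e4: "(\<Sum>l<n. ?X $$ (i,l) * (\<alpha> * p l)) = \<alpha> * (\<Sum>l<n. ?X $$ (i,l) * p l)"
      by (simp add: sum_distrib_left mult.assoc mult.left_commute)
    have e5: "\<alpha> * (\<alpha>^k * p i) \<le> \<alpha> * (\<Sum>l<n. ?X $$ (i,l) * p l)" using IH[OF i] a by (rule mult_left_mono)
    show ?thesis using e1 e2 e3 e4 e5 by (simp add: mult.assoc)
  qed
  show ?case using nn gr by auto
qed

lemma no_sup_vec:
  fixes S :: "real mat"
  assumes S: "S \<in> carrier_mat n n"
    and Snn: "\<And>i j. i < n \<Longrightarrow> j < n \<Longrightarrow> S $$ (i,j) \<ge> 0"
    and pnn: "\<And>j. j < n \<Longrightarrow> p j \<ge> 0"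
    and i0: "i0 < n" and p0: "p i0 > 0"
    and sup: "\<And>i. i < n \<Longrightarrow> p i \<le> (\<Sum>j<n. S $$ (i,j) * p j)"
    and st: "schur_stable S"
  shows False
proof -
  define Sc where "Sc = map_mat complex_of_real S"
  have Sc: "Sc \<in> carrier_mat n n" using S by (simp add: Sc_def)
  have n: "n > 0" using i0 by simp
  define \<rho> where "\<rho> = spectral_radius Sc"
  have rho1: "\<rho> < 1" using st by (simp add: schur_stable_def \<rho>_def Sc_def)
  have rho0: "\<rho> \<ge> 0" using spectral_radius_mem_max(1)[OF Sc n] unfolding \<rho>_def by auto
  define \<alpha> where "\<alpha> = 2 / (1 + \<rho>)"
  have a1: "\<alpha> > 1" using rho0 rho1 by (simp add: \<alpha>_def field_simps)
  have arho: "\<alpha> * \<rho> < 1" using rho0 rho1 by (simp add: \<alpha>_def field_simps)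
  define P where "P = \<alpha> \<cdot>\<^sub>m S"
  have P: "P \<in> carrier_mat n n" using S by (simp add: P_def)
  define Pc where "Pc = map_mat complex_of_real P"
  have Pc: "Pc \<in> carrier_mat n n" using P by (simp add: Pc_def)
  have "spectral_radius Pc < 1"
  proof -
    obtain lam where lam: "lam \<in> spectrum Pc" and eq: "spectral_radius Pc = norm lam"
      using spectral_radius_mem_max(1)[OF Pc n] by auto
    then obtain v where ev: "eigenvector Pc v lam" unfolding spectrum_def eigenvalue_def by auto
    have v: "v \<in> carrier_vec n" and v0: "v \<noteq> 0\<^sub>v n" and Pv: "Pc *\<^sub>v v = lam \<cdot>\<^sub>v v"
      using ev Pc unfolding eigenvector_def by auto
    have "Sc *\<^sub>v v = (lam / complex_of_real \<alpha>) \<cdot>\<^sub>v v"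
    proof (rule eq_vecI)
      fix i assume i: "i < dim_vec ((lam / complex_of_real \<alpha>) \<cdot>\<^sub>v v)"
      then have i: "i < n" using v by simp
      have "(Pc *\<^sub>v v) $ i = complex_of_real \<alpha> * ((Sc *\<^sub>v v) $ i)"
        using i Pc Sc S P v by (simp add: Pc_def Sc_def P_def scalar_prod_def sum_distrib_left mult.assoc)
      moreover have "(Pc *\<^sub>v v) $ i = lam * v $ i" using Pv i v by simp
      ultimately show "(Sc *\<^sub>v v) $ i = ((lam / complex_of_real \<alpha>) \<cdot>\<^sub>v v) $ i"
        using i v a1 by (simp add: field_simps)
    qed (use v Sc in simp)
    then have "eigenvector Sc v (lam / complex_of_real \<alpha>)"
      using v v0 Sc unfolding eigenvector_def by auto
    then have "lam / complex_of_real \<alpha> \<in> spectrum Sc" unfolding spectrum_def eigenvalue_def by auto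
    then have "norm (lam / complex_of_real \<alpha>) \<le> \<rho>"
      using spectral_radius_mem_max(2)[OF Sc n] unfolding \<rho>_def by auto
    then have "norm lam \<le> \<alpha> * \<rho>" using a1 by (simp add: norm_divide field_simps)
    then show ?thesis using eq arho by simp
  qed
  then obtain c where c: "\<And>k. norm_bound (Pc ^\<^sub>m k) c"
    using spectral_radius_jnf_norm_bound_less_1_upper_triangular[OF Pc] by auto
  have bnd: "\<bar>(P ^\<^sub>m k) $$ (i,j)\<bar> \<le> c" if "i < n" "j < n" for i j k
  proof -
    have "Pc ^\<^sub>m k = map_mat complex_of_real (P ^\<^sub>m k)"
      unfolding Pc_def by (rule of_real_hom.mat_hom_pow[OF P, symmetric])
    then show ?thesis using c[of k] that P unfolding norm_bound_def by auto
  qed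
  have grow: "\<alpha> * p i \<le> (\<Sum>j<n. P $$ (i,j) * p j)" if "i < n" for i
  proof -
    have "(\<Sum>j<n. P $$ (i,j) * p j) = \<alpha> * (\<Sum>j<n. S $$ (i,j) * p j)"
      using that S by (simp add: P_def sum_distrib_left mult.assoc)
    then show ?thesis using sup[OF that] a1 by simp
  qed
  have Pnn: "\<And>i j. i < n \<Longrightarrow> j < n \<Longrightarrow> P $$ (i,j) \<ge> 0"
    using Snn a1 S by (simp add: P_def)
  define T where "T = (\<Sum>j<n. p j)"
  obtain k where k: "c * T / p i0 < \<alpha> ^ k" using real_arch_pow[OF a1] by blast
  have "\<alpha>^k * p i0 \<le> (\<Sum>j<n. (P ^\<^sub>m k) $$ (i0,j) * p j)"
    using pow_growth[OF P Pnn _ pnn grow, of k] a1 i0 by auto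
  also have "\<dots> \<le> (\<Sum>j<n. c * p j)"
  proof (rule sum_mono)
    fix j assume "j \<in> {..<n}"
    then have j: "j < n" by simp
    have "(P ^\<^sub>m k) $$ (i0,j) \<le> c" using bnd[OF i0 j, of k] by simp
    then show "(P ^\<^sub>m k) $$ (i0,j) * p j \<le> c * p j" using pnn[OF j] by (rule mult_right_mono)
  qed
  also have "\<dots> = c * T" by (simp add: T_def sum_distrib_left)
  finally have "\<alpha>^k * p i0 \<le> c * T" .
  then have "\<alpha>^k \<le> c * T / p i0" using p0 by (simp add: field_simps)
  then show False using k by simp
qed

lemma sum_split_gen: fixes n m :: nat shows "(\<Sum>j<n+m. f j) = (\<Sum>j<n. f j) + (\<Sum>j<m. f (n+j) :: real)"
  by (induction m) auto

lemma sum_split_nn: fixes n :: nat shows "(\<Sum>j<n+n. f j) = (\<Sum>j<n. f j) + (\<Sum>j<n. f (n+j) :: real)"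
  by (rule sum_split_gen)

lemma leslie_max_idx:
  "i < n \<Longrightarrow> j < n \<Longrightarrow> leslie_max n F A B $$ (i,j) =
     (if i = 0 then F $$ (0,j)
     else if i = j + 1 \<or> (i = n - 1 \<and> j = n - 1) then max (A $$ (i,j)) (B $$ (i,j))
     else 0)"
  unfolding leslie_max_def by simp

lemma leslie_max_carrier: "leslie_max n F A B \<in> carrier_mat n n"
  unfolding leslie_max_def by simp

theorem proposition1:
  fixes n :: nat and A B D :: "real mat"
  assumes "n \<ge> 1"
    and "ext_leslie n A" and "ext_leslie n B"
    and "schur_stable (leslie_max n A A B)"
    and "schur_stable (leslie_max n B A B)"
    and "D \<in> L_set n A B"
  shows "schur_stable (four_block_mat (A - D) D D (B - D))"
proof -
  note n1 = assms(1)
  have A: "A \<in> carrier_mat n n" and Ann: "\<And>i j. i<n \<Longrightarrow> j<n \<Longrightarrow> A $$ (i,j) \<ge> 0"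
    and Az: "\<And>i j. i<n \<Longrightarrow> j<n \<Longrightarrow> A $$ (i,j) \<noteq> 0 \<Longrightarrow> i = 0 \<or> i = j + 1 \<or> (i = n - 1 \<and> j = n - 1)"
    using assms(2) unfolding ext_leslie_def nonneg_mat_def by auto
  have B: "B \<in> carrier_mat n n" and Bnn: "\<And>i j. i<n \<Longrightarrow> j<n \<Longrightarrow> B $$ (i,j) \<ge> 0"
    and Bz: "\<And>i j. i<n \<Longrightarrow> j<n \<Longrightarrow> B $$ (i,j) \<noteq> 0 \<Longrightarrow> i = 0 \<or> i = j + 1 \<or> (i = n - 1 \<and> j = n - 1)"
    using assms(3) unfolding ext_leslie_def nonneg_mat_def by auto
  have D: "D \<in> carrier_mat n n" and Dnn: "\<And>i j. i<n \<Longrightarrow> j<n \<Longrightarrow> D $$ (i,j) \<ge> 0"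
    and AD: "\<And>i j. i<n \<Longrightarrow> j<n \<Longrightarrow> D $$ (i,j) \<le> A $$ (i,j)"
    and BD: "\<And>i j. i<n \<Longrightarrow> j<n \<Longrightarrow> D $$ (i,j) \<le> B $$ (i,j)"
    using assms(6) A B unfolding L_set_def nonneg_mat_def by auto
  define M where "M = four_block_mat (A - D) D D (B - D)"
  have M: "M \<in> carrier_mat (n+n) (n+n)" using A B D by (auto simp: M_def)
  have M1: "M $$ (i,j) = A $$ (i,j) - D $$ (i,j)" if "i<n" "j<n" for i j
    using that A B D by (simp add: M_def)
  have M2: "M $$ (i,n+j) = D $$ (i,j)" if "i<n" "j<n" for i j
    using that A B D by (simp add: M_def)
  have M3: "M $$ (n+i,j) = D $$ (i,j)" if "i<n" "j<n" for i j
    using that A B D by (simp add: M_def)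
  have M4: "M $$ (n+i,n+j) = B $$ (i,j) - D $$ (i,j)" if "i<n" "j<n" for i j
    using that A B D by (simp add: M_def)
  have Mnn: "M $$ (r,j) \<ge> 0" if "r < n+n" "j < n+n" for r j
  proof -
    consider "r < n" "j < n" | "r < n" "j \<ge> n" | "r \<ge> n" "j < n" | "r \<ge> n" "j \<ge> n" by linarith
    then show ?thesis
    proof cases
      case 1 then show ?thesis using M1[OF 1] AD[OF 1] by simp
    next
      case 2 then show ?thesis using M2[of r "j-n"] Dnn[of r "j-n"] that by simp
    next
      case 3 then show ?thesis using M3[of "r-n" j] Dnn[of "r-n" j] that by simp
    next
      case 4 then show ?thesis using M4[of "r-n" "j-n"] BD[of "r-n" "j-n"] that by simp
    qed
  qed
  define Mc where "Mc = map_mat complex_of_real M"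
  have Mc: "Mc \<in> carrier_mat (n+n) (n+n)" using M by (simp add: Mc_def)
  have np: "n + n > 0" using n1 by simp
  show ?thesis
  proof (rule ccontr)
    assume "\<not> ?thesis"
    then have ge: "spectral_radius Mc \<ge> 1" by (simp add: schur_stable_def Mc_def M_def)
    obtain mu where mu: "mu \<in> spectrum Mc" and eq: "spectral_radius Mc = norm mu"
      using spectral_radius_mem_max(1)[OF Mc np] by auto
    then obtain z where ev: "eigenvector Mc z mu" unfolding spectrum_def eigenvalue_def by auto
    have z: "z \<in> carrier_vec (n+n)" and z0: "z \<noteq> 0\<^sub>v (n+n)" and Mz: "Mc *\<^sub>v z = mu \<cdot>\<^sub>v z"
      using ev Mc unfolding eigenvector_def by auto
    define a where "a r = cmod (z $ r)" for r
    have sub: "a r \<le> (\<Sum>j<n+n. M $$ (r,j) * a j)" if r: "r < n+n" for r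
    proof -
      have "(Mc *\<^sub>v z) $ r = (\<Sum>j<n+n. complex_of_real (M $$ (r,j)) * z $ j)"
        using r Mc M z by (simp add: Mc_def scalar_prod_def atLeast0LessThan)
      moreover have "(Mc *\<^sub>v z) $ r = mu * z $ r" using Mz r z by simp
      ultimately have "norm mu * a r = norm (\<Sum>j<n+n. complex_of_real (M $$ (r,j)) * z $ j)"
        unfolding a_def by (metis norm_mult)
      also have "\<dots> \<le> (\<Sum>j<n+n. norm (complex_of_real (M $$ (r,j)) * z $ j))" by (rule norm_sum)
      also have "\<dots> = (\<Sum>j<n+n. M $$ (r,j) * a j)"
        using Mnn r by (intro sum.cong refl) (simp add: a_def norm_mult)
      finally have "norm mu * a r \<le> (\<Sum>j<n+n. M $$ (r,j) * a j)" .
      moreover have "a r \<le> norm mu * a r" using ge eq mult_right_mono[of 1 "norm mu" "a r"] by (simp add: a_def)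
      ultimately show ?thesis by linarith
    qed
    have a0: "a r \<ge> 0" for r by (simp add: a_def)
    obtain r0 where r0: "r0 < n+n" "a r0 > 0"
    proof -
      have "\<exists>r<n+n. z $ r \<noteq> 0"
      proof (rule ccontr)
        assume "\<not> ?thesis"
        then have "z = 0\<^sub>v (n+n)" using z by (intro eq_vecI) auto
        then show False using z0 by simp
      qed
      then show ?thesis using that by (auto simp: a_def)
    qed
    define p where "p j = max (a j) (a (n+j))" for j
    have pnn: "p j \<ge> 0" for j by (simp add: p_def a0 le_max_iff_disj)
    have subA: "a i \<le> (\<Sum>j<n. A $$ (i,j) * p j)" if i: "i < n" for i
    proof -
      have "a i \<le> (\<Sum>j<n. M $$ (i,j) * a j) + (\<Sum>j<n. M $$ (i,n+j) * a (n+j))"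
        using sub[of i] i by (simp add: sum_split_nn)
      also have "\<dots> = (\<Sum>j<n. (A $$ (i,j) - D $$ (i,j)) * a j + D $$ (i,j) * a (n+j))"
        unfolding sum.distrib[symmetric] using i M1 M2 by (intro sum.cong refl) simp
      also have "\<dots> \<le> (\<Sum>j<n. (A $$ (i,j) - D $$ (i,j)) * p j + D $$ (i,j) * p j)"
      proof (rule sum_mono)
        fix j assume "j \<in> {..<n}" then have j: "j < n" by simp
        have "(A $$ (i,j) - D $$ (i,j)) * a j \<le> (A $$ (i,j) - D $$ (i,j)) * p j"
          using AD[OF i j] by (intro mult_left_mono) (auto simp: p_def)
        moreover have "D $$ (i,j) * a (n+j) \<le> D $$ (i,j) * p j"
          using Dnn[OF i j] by (intro mult_left_mono) (auto simp: p_def)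
        ultimately show "(A $$ (i,j) - D $$ (i,j)) * a j + D $$ (i,j) * a (n+j)
          \<le> (A $$ (i,j) - D $$ (i,j)) * p j + D $$ (i,j) * p j" by linarith
      qed
      also have "\<dots> = (\<Sum>j<n. A $$ (i,j) * p j)" by (simp add: algebra_simps)
      finally show ?thesis .
    qed
    have subB: "a (n+i) \<le> (\<Sum>j<n. B $$ (i,j) * p j)" if i: "i < n" for i
    proof -
      have "a (n+i) \<le> (\<Sum>j<n. M $$ (n+i,j) * a j) + (\<Sum>j<n. M $$ (n+i,n+j) * a (n+j))"
        using sub[of "n+i"] i by (simp add: sum_split_nn)
      also have "\<dots> = (\<Sum>j<n. D $$ (i,j) * a j + (B $$ (i,j) - D $$ (i,j)) * a (n+j))"
        unfolding sum.distrib[symmetric] using i M3 M4 by (intro sum.cong refl) simp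
      also have "\<dots> \<le> (\<Sum>j<n. D $$ (i,j) * p j + (B $$ (i,j) - D $$ (i,j)) * p j)"
      proof (rule sum_mono)
        fix j assume "j \<in> {..<n}" then have j: "j < n" by simp
        have "(B $$ (i,j) - D $$ (i,j)) * a (n+j) \<le> (B $$ (i,j) - D $$ (i,j)) * p j"
          using BD[OF i j] by (intro mult_left_mono) (auto simp: p_def)
        moreover have "D $$ (i,j) * a j \<le> D $$ (i,j) * p j"
          using Dnn[OF i j] by (intro mult_left_mono) (auto simp: p_def)
        ultimately show "D $$ (i,j) * a j + (B $$ (i,j) - D $$ (i,j)) * a (n+j)
          \<le> D $$ (i,j) * p j + (B $$ (i,j) - D $$ (i,j)) * p j" by linarith
      qed
      also have "\<dots> = (\<Sum>j<n. B $$ (i,j) * p j)" by (simp add: algebra_simps)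
      finally show ?thesis .
    qed
    obtain i0 where i0: "i0 < n" "p i0 > 0"
    proof (cases "r0 < n")
      case True then show ?thesis using that[of r0] r0 by (auto simp: p_def)
    next
      case False then show ?thesis using that[of "r0 - n"] r0 by (auto simp: p_def)
    qed
    have gen: False if F: "F = A \<or> F = B" and row0: "p 0 \<le> (\<Sum>j<n. F $$ (0,j) * p j)"
      and st: "schur_stable (leslie_max n F A B)" for F
    proof -
      let ?S = "leslie_max n F A B"
      have Snn: "?S $$ (i,j) \<ge> 0" if "i < n" "j < n" for i j
        using that F Ann[of i j] Bnn[of i j] Ann[of 0 j] Bnn[of 0 j] by (auto simp: leslie_max_idx le_max_iff_disj)
      have AS: "A $$ (i,j) \<le> ?S $$ (i,j)" "B $$ (i,j) \<le> ?S $$ (i,j)" if "i < n" "j < n" "i \<noteq> 0" for i j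
      proof -
        have e: "?S $$ (i,j) = (if i = j + 1 \<or> (i = n - 1 \<and> j = n - 1) then max (A $$ (i,j)) (B $$ (i,j)) else 0)"
          using that by (simp add: leslie_max_idx)
        show "A $$ (i,j) \<le> ?S $$ (i,j)"
        proof (cases "i = j + 1 \<or> (i = n - 1 \<and> j = n - 1)")
          case True then show ?thesis using e by simp
        next
          case False then have "A $$ (i,j) = 0" using Az[of i j] that by blast
          then show ?thesis unfolding e if_not_P[OF False] by simp
        qed
        show "B $$ (i,j) \<le> ?S $$ (i,j)"
        proof (cases "i = j + 1 \<or> (i = n - 1 \<and> j = n - 1)")
          case True then show ?thesis using e by simp
        next
          case False then have "B $$ (i,j) = 0" using Bz[of i j] that by blast
          then show ?thesis unfolding e if_not_P[OF False] by simp
        qed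
      qed
      have supv: "p i \<le> (\<Sum>j<n. ?S $$ (i,j) * p j)" if i: "i < n" for i
      proof (cases "i = 0")
        case True
        have "(\<Sum>j<n. ?S $$ (i,j) * p j) = (\<Sum>j<n. F $$ (0,j) * p j)"
          using True by (intro sum.cong refl) (simp add: leslie_max_idx)
        then show ?thesis using row0 True by simp
      next
        case False
        have "(\<Sum>j<n. A $$ (i,j) * p j) \<le> (\<Sum>j<n. ?S $$ (i,j) * p j)"
          using AS(1)[OF i _ False] pnn by (intro sum_mono mult_right_mono) auto
        moreover have "(\<Sum>j<n. B $$ (i,j) * p j) \<le> (\<Sum>j<n. ?S $$ (i,j) * p j)"
          using AS(2)[OF i _ False] pnn by (intro sum_mono mult_right_mono) auto
        ultimately show ?thesis using subA[OF i] subB[OF i] by (simp add: p_def)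
      qed
      show False by (rule no_sup_vec[OF leslie_max_carrier Snn pnn i0 supv st])
    qed
    have n0: "0 < n" using n1 by simp
    show False
    proof (cases "a n \<le> a 0")
      case True
      then have "p 0 = a 0" by (simp add: p_def)
      then show False using subA[OF n0] assms(4) by (intro gen[of A]) simp_all
    next
      case False
      then have "p 0 = a n" by (simp add: p_def)
      then show False using subB[OF n0] assms(5) by (intro gen[of B]) simp_all
    qed
  qed
qed

end
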